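(* Let $e_1,\dots,e_m$ be domains, in each of which a random pair $(X,Y)$ with $X\in\mathbb{R}^d$ is observed, and assume: (i) $Y$ is generated from a linear structural equation model $Y=\beta^\intercal X+N$ with coefficients $\beta\in\mathbb{R}^d$ and noise $N$ with finite second moment; (ii) predictors are linear, $x\mapsto\hat\beta^\intercal x$ with $\hat\beta\in\mathbb{R}^d$; (iii) the loss is squared error, so the risk in domain $e_i$ is $\mathcal{R}^{e_i}(\hat\beta)=\mathbb{E}_{e_i}[(Y-\hat\beta^\intercal X)^2]$; (iv) the risk $\mathbb{E}_{e_i}[(Y-\beta^\intercal X)^2]$ of the causal predictor $\beta$ is the same for all $i=1,\dots,m$; (v) in every domain $e_i$ the covariates and the noise are centered, $\mathbb{E}_{e_i}[X]=0$ and $\mathbb{E}_{e_i}[N]=0$, and the system of equations in $x\in\mathbb{R}^d$ $$0\ge x^\intercal\mathrm{Cov}_{e_1}(X,X)x+2x^\intercal\mathrm{Cov}_{e_1}(X,N)=\cdots=x^\intercal\mathrm{Cov}_{e_m}(X,X)x+2x^\intercal\mathrm{Cov}_{e_m}(X,N)$$ has the unique solution $x=0$. If $\hat\beta$ is a minimal invariant-risk predictor, then $\hat\beta=\beta$.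
   Context: A linear predictor $\hat\beta$ is an invariant-risk predictor if $\mathcal{R}^{e_1}(\hat\beta)=\cdots=\mathcal{R}^{e_m}(\hat\beta)$; it is a minimal invariant-risk predictor if it is an invariant-risk predictor whose (common) risk is minimal among all invariant-risk linear predictors. $\mathrm{Cov}_{e_i}$ denotes covariance under the distribution of domain $e_i$. *)

theory Defs
  imports "HOL-Probability.Probability"
begin

definition risk :: "'a measure \<Rightarrow> ('a \<Rightarrow> real^'d) \<Rightarrow> ('a \<Rightarrow> real) \<Rightarrow> real^'d \<Rightarrow> real" where
  "risk M X Y b = integral\<^sup>L M (\<lambda>\<omega>. (Y \<omega> - b \<bullet> X \<omega>)\<^sup>2)"

definition cov :: "'a measure \<Rightarrow> ('a \<Rightarrow> real) \<Rightarrow> ('a \<Rightarrow> real) \<Rightarrow> real" where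
  "cov M U V = integral\<^sup>L M (\<lambda>\<omega>. U \<omega> * V \<omega>) - integral\<^sup>L M U * integral\<^sup>L M V"

definition cov_mat :: "'a measure \<Rightarrow> ('a \<Rightarrow> real^'d) \<Rightarrow> real^'d^'d" where
  "cov_mat M X = (\<chi> j k. cov M (\<lambda>\<omega>. X \<omega> $ j) (\<lambda>\<omega>. X \<omega> $ k))"

definition cov_vec :: "'a measure \<Rightarrow> ('a \<Rightarrow> real^'d) \<Rightarrow> ('a \<Rightarrow> real) \<Rightarrow> real^'d" where
  "cov_vec M X N = (\<chi> j. cov M (\<lambda>\<omega>. X \<omega> $ j) N)"

text \<open>Domains are indexed by i < m.\<close>
definition invariant_risk ::
  "nat \<Rightarrow> (nat \<Rightarrow> 'a measure) \<Rightarrow> (nat \<Rightarrow> 'a \<Rightarrow> real^'d) \<Rightarrow> (nat \<Rightarrow> 'a \<Rightarrow> real) \<Rightarrow> real^'d \<Rightarrow> bool" where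
  "invariant_risk m M X Y b \<longleftrightarrow>
     (\<forall>i<m. \<forall>j<m. risk (M i) (X i) (Y i) b = risk (M j) (X j) (Y j) b)"

definition minimal_invariant_risk ::
  "nat \<Rightarrow> (nat \<Rightarrow> 'a measure) \<Rightarrow> (nat \<Rightarrow> 'a \<Rightarrow> real^'d) \<Rightarrow> (nat \<Rightarrow> 'a \<Rightarrow> real) \<Rightarrow> real^'d \<Rightarrow> bool" where
  "minimal_invariant_risk m M X Y b \<longleftrightarrow>
     invariant_risk m M X Y b \<and>
     (\<forall>b'. invariant_risk m M X Y b' \<longrightarrow>
        risk (M 0) (X 0) (Y 0) b \<le> risk (M 0) (X 0) (Y 0) b')"

end

theory Submission
  imports Defs
begin

lemma key:
  fixes X :: "'a \<Rightarrow> real^'d" and x :: "real^'d"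
  assumes P: "prob_space M" and Xm[measurable]: "X \<in> borel_measurable M"
    and Xsq: "integrable M (\<lambda>\<omega>. (norm (X \<omega>))\<^sup>2)"
    and Nm[measurable]: "N \<in> borel_measurable M" and Nsq: "integrable M (\<lambda>\<omega>. (N \<omega>)\<^sup>2)"
    and EX: "integral\<^sup>L M X = 0" and EN: "integral\<^sup>L M N = 0"
  shows "integral\<^sup>L M (\<lambda>\<omega>. (x \<bullet> X \<omega> + N \<omega>)\<^sup>2)
     = x \<bullet> (cov_mat M X *v x) + 2 * (x \<bullet> cov_vec M X N) + integral\<^sup>L M (\<lambda>\<omega>. (N \<omega>)\<^sup>2)"
proof -
  have tle: "t \<le> 1 + t\<^sup>2" for t :: real
    using zero_le_power2[of "t - 1/2"] by (simp add: power2_eq_square algebra_simps)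
  have able: "a * b \<le> a\<^sup>2 + b\<^sup>2" if "0 \<le> a" "0 \<le> b" for a b :: real
    using zero_le_power2[of "a - b"] mult_nonneg_nonneg[OF that] by (simp add: power2_eq_square algebra_simps)
  interpret prob_space M by (rule P)
  have iX: "integrable M X"
  proof (rule Bochner_Integration.integrable_bound[OF Bochner_Integration.integrable_add[OF integrable_const[of 1] Xsq]])
    show "AE \<omega> in M. norm (X \<omega>) \<le> norm (1 + (norm (X \<omega>))\<^sup>2)"
    proof (intro AE_I2)
      fix \<omega>
      show "norm (X \<omega>) \<le> norm (1 + (norm (X \<omega>))\<^sup>2)" using tle[of "norm (X \<omega>)"] by simp
    qed
  qed simp
  have iN: "integrable M N"
    by (rule square_integrable_imp_integrable[OF Nm Nsq])
  have cmp: "X \<omega> $ j = X \<omega> \<bullet> axis j 1" for \<omega> j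
    by (simp add: inner_axis)
  have cm[measurable]: "(\<lambda>\<omega>. X \<omega> $ j) \<in> borel_measurable M" for j
    unfolding cmp by measurable
  have iXj: "integrable M (\<lambda>\<omega>. X \<omega> $ j)" for j
    unfolding cmp using iX by simp
  have EXj: "integral\<^sup>L M (\<lambda>\<omega>. X \<omega> $ j) = 0" for j
    unfolding cmp using iX EX by simp
  have le: "\<bar>X \<omega> $ j\<bar> \<le> norm (X \<omega>)" for \<omega> j
    by (rule component_le_norm_cart)
  have iXX: "integrable M (\<lambda>\<omega>. X \<omega> $ j * X \<omega> $ k)" for j k
  proof (rule Bochner_Integration.integrable_bound[OF Xsq])
    show "AE \<omega> in M. norm (X \<omega> $ j * X \<omega> $ k) \<le> norm ((norm (X \<omega>))\<^sup>2)"
    proof (intro AE_I2)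
      fix \<omega>
      have "\<bar>X \<omega> $ j * X \<omega> $ k\<bar> \<le> norm (X \<omega>) * norm (X \<omega>)"
        unfolding abs_mult by (intro mult_mono le) auto
      then show "norm (X \<omega> $ j * X \<omega> $ k) \<le> norm ((norm (X \<omega>))\<^sup>2)"
        by (simp add: power2_eq_square)
    qed
  qed simp
  have iXN: "integrable M (\<lambda>\<omega>. X \<omega> $ j * N \<omega>)" for j
  proof (rule Bochner_Integration.integrable_bound[OF Bochner_Integration.integrable_add[OF Xsq Nsq]])
    show "AE \<omega> in M. norm (X \<omega> $ j * N \<omega>) \<le> norm ((norm (X \<omega>))\<^sup>2 + (N \<omega>)\<^sup>2)"
    proof (intro AE_I2)
      fix \<omega>
      have "\<bar>X \<omega> $ j * N \<omega>\<bar> \<le> norm (X \<omega>) * \<bar>N \<omega>\<bar>"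
        using le by (auto simp: abs_mult intro!: mult_right_mono)
      also have "\<dots> \<le> (norm (X \<omega>))\<^sup>2 + (N \<omega>)\<^sup>2"
        using able[of "norm (X \<omega>)" "\<bar>N \<omega>\<bar>"] by simp
      finally show "norm (X \<omega> $ j * N \<omega>) \<le> norm ((norm (X \<omega>))\<^sup>2 + (N \<omega>)\<^sup>2)" by simp
    qed
  qed simp
  have C: "cov_mat M X $ j $ k = integral\<^sup>L M (\<lambda>\<omega>. X \<omega> $ j * X \<omega> $ k)" for j k
    by (simp add: cov_mat_def cov_def EXj)
  have V: "cov_vec M X N $ j = integral\<^sup>L M (\<lambda>\<omega>. X \<omega> $ j * N \<omega>)" for j
    by (simp add: cov_vec_def cov_def EXj)
  have e1: "x \<bullet> (cov_mat M X *v x) = integral\<^sup>L M (\<lambda>\<omega>. (x \<bullet> X \<omega>)\<^sup>2)"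
  proof -
    have "x \<bullet> (cov_mat M X *v x) = (\<Sum>j\<in>UNIV. \<Sum>k\<in>UNIV. integral\<^sup>L M (\<lambda>\<omega>. x $ j * x $ k * (X \<omega> $ j * X \<omega> $ k)))"
      by (simp add: inner_vec_def matrix_vector_mult_def C sum_distrib_left mult_ac)
    also have "\<dots> = integral\<^sup>L M (\<lambda>\<omega>. \<Sum>j\<in>UNIV. \<Sum>k\<in>UNIV. x $ j * x $ k * (X \<omega> $ j * X \<omega> $ k))"
      by (simp add: iXX integrable_sum)
    also have "\<dots> = integral\<^sup>L M (\<lambda>\<omega>. (x \<bullet> X \<omega>)\<^sup>2)"
      by (simp add: inner_vec_def power2_eq_square sum_product mult_ac)
    finally show ?thesis .
  qed
  have e2: "x \<bullet> cov_vec M X N = integral\<^sup>L M (\<lambda>\<omega>. (x \<bullet> X \<omega>) * N \<omega>)"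
  proof -
    have "x \<bullet> cov_vec M X N = (\<Sum>j\<in>UNIV. integral\<^sup>L M (\<lambda>\<omega>. x $ j * (X \<omega> $ j * N \<omega>)))"
      by (simp add: inner_vec_def V)
    also have "\<dots> = integral\<^sup>L M (\<lambda>\<omega>. \<Sum>j\<in>UNIV. x $ j * (X \<omega> $ j * N \<omega>))"
      by (simp add: iXN)
    also have "\<dots> = integral\<^sup>L M (\<lambda>\<omega>. (x \<bullet> X \<omega>) * N \<omega>)"
      by (simp add: inner_vec_def sum_distrib_left sum_distrib_right mult_ac)
    finally show ?thesis .
  qed
  have i1: "integrable M (\<lambda>\<omega>. (x \<bullet> X \<omega>)\<^sup>2)"
  proof -
    have "(\<lambda>\<omega>. (x \<bullet> X \<omega>)\<^sup>2) = (\<lambda>\<omega>. \<Sum>i\<in>UNIV. \<Sum>j\<in>UNIV. (x $ i * x $ j) * (X \<omega> $ i * X \<omega> $ j))"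
      by (simp add: inner_vec_def power2_eq_square sum_product mult_ac)
    then show ?thesis by (simp only:) (intro Bochner_Integration.integrable_sum integrable_mult_right iXX)
  qed
  have i2: "integrable M (\<lambda>\<omega>. (x \<bullet> X \<omega>) * N \<omega>)"
    by (simp add: inner_vec_def sum_distrib_right iXN mult.assoc)
  have "integral\<^sup>L M (\<lambda>\<omega>. (x \<bullet> X \<omega> + N \<omega>)\<^sup>2)
     = integral\<^sup>L M (\<lambda>\<omega>. (x \<bullet> X \<omega>)\<^sup>2 + 2 * ((x \<bullet> X \<omega>) * N \<omega>) + (N \<omega>)\<^sup>2)"
    by (intro Bochner_Integration.integral_cong refl) (simp add: power2_sum algebra_simps)
  also have "\<dots> = integral\<^sup>L M (\<lambda>\<omega>. (x \<bullet> X \<omega>)\<^sup>2) + 2 * integral\<^sup>L M (\<lambda>\<omega>. (x \<bullet> X \<omega>) * N \<omega>) + integral\<^sup>L M (\<lambda>\<omega>. (N \<omega>)\<^sup>2)"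
    using i1 i2 Nsq by simp
  finally show ?thesis using e1 e2 by simp
qed


theorem theorem4p3:
  fixes m :: nat
    and M :: "nat \<Rightarrow> 'a measure"
    and X :: "nat \<Rightarrow> 'a \<Rightarrow> real^'d"
    and N :: "nat \<Rightarrow> 'a \<Rightarrow> real"
    and Y :: "nat \<Rightarrow> 'a \<Rightarrow> real"
    and \<beta> bhat :: "real^'d"
  assumes m: "m \<ge> 1"
    and prob: "\<And>i. i < m \<Longrightarrow> prob_space (M i)"
    and X_meas: "\<And>i. i < m \<Longrightarrow> X i \<in> borel_measurable (M i)"
    and X_sq: "\<And>i. i < m \<Longrightarrow> integrable (M i) (\<lambda>\<omega>. (norm (X i \<omega>))\<^sup>2)"
    and N_meas: "\<And>i. i < m \<Longrightarrow> N i \<in> borel_measurable (M i)"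
    and N_sq: "\<And>i. i < m \<Longrightarrow> integrable (M i) (\<lambda>\<omega>. (N i \<omega>)\<^sup>2)"
    and SEM: "\<And>i \<omega>. i < m \<Longrightarrow> \<omega> \<in> space (M i) \<Longrightarrow> Y i \<omega> = \<beta> \<bullet> X i \<omega> + N i \<omega>"
    and causal_inv: "\<And>i j. i < m \<Longrightarrow> j < m \<Longrightarrow>
        risk (M i) (X i) (Y i) \<beta> = risk (M j) (X j) (Y j) \<beta>"
    and X_centered: "\<And>i. i < m \<Longrightarrow> integral\<^sup>L (M i) (X i) = 0"
    and N_centered: "\<And>i. i < m \<Longrightarrow> integral\<^sup>L (M i) (N i) = 0"
    and unique: "\<And>x. \<lbrakk> 0 \<ge> x \<bullet> (cov_mat (M 0) (X 0) *v x) + 2 * (x \<bullet> cov_vec (M 0) (X 0) (N 0));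
                        \<forall>i<m. x \<bullet> (cov_mat (M i) (X i) *v x) + 2 * (x \<bullet> cov_vec (M i) (X i) (N i))
                             = x \<bullet> (cov_mat (M 0) (X 0) *v x) + 2 * (x \<bullet> cov_vec (M 0) (X 0) (N 0)) \<rbrakk>
                      \<Longrightarrow> x = 0"
    and minimal: "minimal_invariant_risk m M X Y bhat"
  shows "bhat = \<beta>"
proof -
  define q where "q i x = x \<bullet> (cov_mat (M i) (X i) *v x) + 2 * (x \<bullet> cov_vec (M i) (X i) (N i))" for i x
  have R: "risk (M i) (X i) (Y i) b = q i (\<beta> - b) + risk (M i) (X i) (Y i) \<beta>" if i: "i < m" for i b
  proof -
    have "risk (M i) (X i) (Y i) b = integral\<^sup>L (M i) (\<lambda>\<omega>. ((\<beta> - b) \<bullet> X i \<omega> + N i \<omega>)\<^sup>2)"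
    proof -
      have e: "Y i \<omega> - b \<bullet> X i \<omega> = (\<beta> - b) \<bullet> X i \<omega> + N i \<omega>" if "\<omega> \<in> space (M i)" for \<omega>
        using SEM[OF i that] inner_diff_left[of \<beta> b "X i \<omega>"] by linarith
      show ?thesis unfolding risk_def by (intro Bochner_Integration.integral_cong refl) (simp only: e)
    qed
    also have "\<dots> = q i (\<beta> - b) + integral\<^sup>L (M i) (\<lambda>\<omega>. (N i \<omega>)\<^sup>2)"
      unfolding q_def
      by (rule key[OF prob[OF i] X_meas[OF i] X_sq[OF i] N_meas[OF i] N_sq[OF i] X_centered[OF i] N_centered[OF i]])
    also have "integral\<^sup>L (M i) (\<lambda>\<omega>. (N i \<omega>)\<^sup>2) = risk (M i) (X i) (Y i) \<beta>"
      unfolding risk_def using SEM[OF i]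
      by (intro Bochner_Integration.integral_cong refl) simp
    finally show ?thesis .
  qed
  define x where "x = \<beta> - bhat"
  have m0: "0 < m" using m by simp
  have inv: "invariant_risk m M X Y bhat" and minb: "\<And>b'. invariant_risk m M X Y b' \<Longrightarrow>
        risk (M 0) (X 0) (Y 0) bhat \<le> risk (M 0) (X 0) (Y 0) b'"
    using minimal unfolding minimal_invariant_risk_def by auto
  have invb: "invariant_risk m M X Y \<beta>"
    unfolding invariant_risk_def using causal_inv by blast
  have le: "risk (M 0) (X 0) (Y 0) bhat \<le> risk (M 0) (X 0) (Y 0) \<beta>" by (rule minb[OF invb])
  have q0: "q 0 x \<le> 0" using le R[OF m0, of bhat] unfolding x_def by linarith
  have qi: "\<forall>i<m. q i x = q 0 x"
  proof (intro allI impI)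
    fix i assume i: "i < m"
    have "risk (M i) (X i) (Y i) bhat = risk (M 0) (X 0) (Y 0) bhat"
      using inv i m0 unfolding invariant_risk_def by blast
    then show "q i x = q 0 x" using R[OF i, of bhat] R[OF m0, of bhat] causal_inv[OF i m0] unfolding x_def by linarith
  qed
  have "x = 0" by (rule unique[OF q0[unfolded q_def] qi[unfolded q_def]])
  then show ?thesis unfolding x_def by simp
qed

end
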